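(* The Split Cycle VCCR satisfies Positive Involvement in Defeat: for every linear profile $\mathbf P$ and $x,y\in X(\mathbf P)$, if $(x,y)\notin sc(\mathbf P)$ and $\mathbf P'$ is obtained from $\mathbf P$ by adding one new voter whose ballot ranks $y$ above $x$, then $(x,y)\notin sc(\mathbf P')$.
   Context: Profiles: $\mathbf P:V\to\mathcal L(X)$, $V$ nonempty finite set of voters, $X=X(\mathbf P)$ nonempty finite set of candidates, $\mathcal L(X)$ strict linear orders. $\mathrm{Margin}_{\mathbf P}(x,y)$ = #voters ranking $x$ above $y$ minus #ranking $y$ above $x$. A majority path from $x_1$ to $x_n$ is $(x_1,\dots,x_n)$ with all $\mathrm{Margin}_{\mathbf P}(x_i,x_{i+1})>0$; its strength is the minimum of these margins. Split Cycle: $(x,y)\in sc(\mathbf P)$ iff $\mathrm{Margin}_{\mathbf P}(x,y)>0$ and it exceeds the strength of every majority path from $y$ to $x$. *)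

theory Defs
  imports Main
begin

text \<open>A ballot on candidate set X: a strict linear order on X (pair (a,b) means a ranked above b).\<close>
definition linear_ballot :: "'a set \<Rightarrow> ('a \<times> 'a) set \<Rightarrow> bool" where
  "linear_ballot X r \<longleftrightarrow> r \<subseteq> X \<times> X \<and> strict_linear_order_on X r"

definition profile :: "'v set \<Rightarrow> 'a set \<Rightarrow> ('v \<Rightarrow> ('a \<times> 'a) set) \<Rightarrow> bool" where
  "profile V X P \<longleftrightarrow> finite V \<and> V \<noteq> {} \<and> finite X \<and> X \<noteq> {} \<and> (\<forall>i\<in>V. linear_ballot X (P i))"

definition margin :: "'v set \<Rightarrow> ('v \<Rightarrow> ('a \<times> 'a) set) \<Rightarrow> 'a \<Rightarrow> 'a \<Rightarrow> int" where
  "margin V P x y = int (card {i\<in>V. (x,y) \<in> P i}) - int (card {i\<in>V. (y,x) \<in> P i})"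

definition majority_path :: "'v set \<Rightarrow> ('v \<Rightarrow> ('a \<times> 'a) set) \<Rightarrow> 'a list \<Rightarrow> bool" where
  "majority_path V P xs \<longleftrightarrow> length xs \<ge> 2 \<and>
     (\<forall>k < length xs - 1. margin V P (xs ! k) (xs ! Suc k) > 0)"

definition path_strength :: "'v set \<Rightarrow> ('v \<Rightarrow> ('a \<times> 'a) set) \<Rightarrow> 'a list \<Rightarrow> int" where
  "path_strength V P xs = Min {margin V P (xs ! k) (xs ! Suc k) | k. k < length xs - 1}"

definition split_cycle :: "'v set \<Rightarrow> 'a set \<Rightarrow> ('v \<Rightarrow> ('a \<times> 'a) set) \<Rightarrow> ('a \<times> 'a) set" where
  "split_cycle V X P = {(x,y). x \<in> X \<and> y \<in> X \<and> margin V P x y > 0 \<and>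
     (\<forall>xs. majority_path V P xs \<and> hd xs = y \<and> last xs = x \<longrightarrow>
            margin V P x y > path_strength V P xs)}"

end

theory Submission
  imports Defs
begin

lemma card_ins:
  assumes "finite V" "v \<notin> V" "\<forall>i\<in>V. P' i = P i"
  shows "int (card {i\<in>insert v V. q \<in> P' i}) = int (card {i\<in>V. q \<in> P i}) + (if q \<in> P' v then 1 else 0)"
proof -
  have e: "{i\<in>V. q \<in> P' i} = {i\<in>V. q \<in> P i}" using assms(3) by auto
  show ?thesis
  proof (cases "q \<in> P' v")
    case True
    then have "{i\<in>insert v V. q \<in> P' i} = insert v {i\<in>V. q \<in> P' i}" by auto
    then show ?thesis using True e assms(1,2) by simp
  next
    case False
    then have "{i\<in>insert v V. q \<in> P' i} = {i\<in>V. q \<in> P' i}" by auto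
    then show ?thesis using False e by simp
  qed
qed

lemma margin_ge:
  assumes "finite V" "v \<notin> V" "\<forall>i\<in>V. P' i = P i"
  shows "margin (insert v V) P' a b \<ge> margin V P a b - 1"
  using card_ins[OF assms, of "(a,b)"] card_ins[OF assms, of "(b,a)"]
  unfolding margin_def by (auto split: if_splits)

lemma margin_xy:
  assumes "finite V" "v \<notin> V" "\<forall>i\<in>V. P' i = P i" "(y,x) \<in> P' v" "(x,y) \<notin> P' v"
  shows "margin (insert v V) P' x y = margin V P x y - 1"
  using card_ins[OF assms(1-3), of "(x,y)"] card_ins[OF assms(1-3), of "(y,x)"] assms(4,5)
  unfolding margin_def by auto

theorem proposition3p14:
  fixes V :: "'v set" and X :: "'a set" and P P' :: "'v \<Rightarrow> ('a \<times> 'a) set"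
    and v :: 'v and x y :: 'a
  assumes "profile V X P"
    and "x \<in> X" and "y \<in> X"
    and "(x, y) \<notin> split_cycle V X P"
    and "v \<notin> V"
    and "\<forall>i\<in>V. P' i = P i"
    and "linear_ballot X (P' v)"
    and "(y, x) \<in> P' v"
  shows "(x, y) \<notin> split_cycle (insert v V) X P'"
proof
  assume sc: "(x, y) \<in> split_cycle (insert v V) X P'"
  have fin: "finite V" using assms(1) unfolding profile_def by auto
  have "(x,y) \<notin> P' v"
  proof
    assume "(x,y) \<in> P' v"
    with assms(7,8) show False unfolding linear_ballot_def strict_linear_order_on_def trans_def irrefl_on_def
      by blast
  qed
  then have mxy: "margin (insert v V) P' x y = margin V P x y - 1"
    using margin_xy[OF fin assms(5,6,8)] by simp
  have mge: "\<And>a b. margin (insert v V) P' a b \<ge> margin V P a b - 1"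
    using margin_ge[OF fin assms(5,6)] by simp
  from sc have pos: "margin (insert v V) P' x y > 0"
    and all: "\<And>xs. majority_path (insert v V) P' xs \<Longrightarrow> hd xs = y \<Longrightarrow> last xs = x \<Longrightarrow>
            margin (insert v V) P' x y > path_strength (insert v V) P' xs"
    unfolding split_cycle_def by auto
  have pos0: "margin V P x y > 0" using pos mxy by simp
  then obtain xs where mp: "majority_path V P xs" and hd: "hd xs = y" and lst: "last xs = x"
    and st: "margin V P x y \<le> path_strength V P xs"
    using assms(2,3,4) unfolding split_cycle_def by fastforce
  have len: "length xs \<ge> 2" using mp unfolding majority_path_def by simp
  have fs: "finite {margin V P (xs ! k) (xs ! Suc k) | k. k < length xs - 1}" by simp
  have edge: "\<And>k. k < length xs - 1 \<Longrightarrow> margin V P x y \<le> margin V P (xs ! k) (xs ! Suc k)"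
  proof -
    fix k assume "k < length xs - 1"
    then have "path_strength V P xs \<le> margin V P (xs ! k) (xs ! Suc k)"
      unfolding path_strength_def by (intro Min_le[OF fs]) blast
    then show "margin V P x y \<le> margin V P (xs ! k) (xs ! Suc k)" using st by simp
  qed
  have edge': "\<And>k. k < length xs - 1 \<Longrightarrow> margin (insert v V) P' x y \<le> margin (insert v V) P' (xs ! k) (xs ! Suc k)"
    using edge mge mxy by (smt (verit))
  have mp': "majority_path (insert v V) P' xs"
    unfolding majority_path_def using len edge' pos by (meson less_le_trans)
  have ne: "{margin (insert v V) P' (xs ! k) (xs ! Suc k) | k. k < length xs - 1} \<noteq> {}"
    using len by (auto intro: exI[of _ 0])
  have "margin (insert v V) P' x y \<le> path_strength (insert v V) P' xs"
    unfolding path_strength_def using edge' ne by (subst Min_ge_iff) auto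
  with all[OF mp' hd lst] show False by simp
qed

end
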